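(* Let $\alpha\ge1$ and $2\le m\le k<n$. Suppose a single-pass streaming algorithm $\mathcal{A}$ with memory $m$ satisfies condition (SR). Then for every $i\in[k]$ and all sufficiently large $T$, $$\Pr_{\nu_i}[\tau_i]\le\frac12\cdot\frac{k-m+1}{k}.$$
   Context: Streaming stochastic multi-armed bandit: $n$ arms arrive one by one in a stream; arm $i$ has Bernoulli rewards with mean $\mu_i$. At most $m$ arms can be stored in memory; in each of $T$ rounds the player may discard stored arms and read next arms from the stream, then pulls exactly one stored arm $A_t$; discarded or passed-over arms cannot be pulled again. Regret $\mathbb{E}_\nu[R(T)]=\mathbb{E}_\nu[\sum_{t=1}^T(\mu_*-\mu_{A_t})]$ with $\mu_*$ the largest mean of $\nu$. Hard instances: $\varepsilon=\frac14\left(\frac{k}{T}\right)^{\frac{1}{2+2\alpha}}$, arms arriving in order $1,\dots,n$. $\nu_1$: arm 1 mean $\frac12+n\varepsilon$, arms $2,\dots,k$ mean $\frac12+(n-1)\varepsilon$, arms $k+1,\dots,n$ mean $\frac12$. For $2\le i\le k$, $\nu_i$ equals $\nu_1$ except arm $i$ has mean $\frac12+(n+1)\varepsilon$. $\mathcal{I}=\{\nu_1,\dots,\nu_k\}$. $\nu_i'$ equals $\nu_i$ except arms $k+1,\dots,n$ have mean $1$; $\mathcal{I}'=\{\nu_1',\dots,\nu_k'\}$. $f(k,m)=\frac{2}{16^{\alpha+1}}\cdot\frac{k-m+1}{k^{\frac{1}{\alpha+1}}}$. Condition (SR): for every $\nu\in\mathcal{I}$, $\mathbb{E}_\nu[R(T)]\le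 f(k,m)T^{\frac{1}{\alpha+1}}\varepsilon^{1-2\alpha}$, and for every $\nu'\in\mathcal{I}'$, $\mathbb{E}_{\nu'}[R(T)]\le\frac1{32}f(k,m)T^{\frac{1}{\alpha+1}}$. Stage one consists of the rounds before the $(k+1)$-th arm of the stream is read; stage two consists of the round in which it is read and all later rounds. $\tau_i$ is the event that arm $i$ is not in memory at the beginning of stage two. *)

theory Defs
  imports "HOL-Probability.Probability"
begin

text \<open>Arms are the natural numbers 1..n, arriving in the stream in the order 1,2,...,n.
  A memory state is a pair (M, r): M is the set of stored arms, r is the number of
  arms read from the stream so far (so arms 1..r have been read; the next arm is r+1).
  Within a round the player performs a finite sequence of primitive operations
  (discard a stored arm / read the next arm of the stream into memory) and then
  pulls one stored arm.\<close>

datatype stream_op = Discard nat | Read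

type_synonym mem_state = "nat set \<times> nat"

definition init_state :: mem_state where
  "init_state = ({}, 0)"

fun step_op :: "nat \<Rightarrow> nat \<Rightarrow> mem_state \<Rightarrow> stream_op \<Rightarrow> mem_state option" where
  "step_op m n (M, r) Read =
     (if r < n \<and> card M < m then Some (insert (Suc r) M, Suc r) else None)"
| "step_op m n (M, r) (Discard i) =
     (if i \<in> M then Some (M - {i}, r) else None)"

fun apply_ops :: "nat \<Rightarrow> nat \<Rightarrow> mem_state \<Rightarrow> stream_op list \<Rightarrow> mem_state option" where
  "apply_ops m n s [] = Some s"
| "apply_ops m n s (op1 # os) =
     (case step_op m n s op1 of None \<Rightarrow> None | Some s' \<Rightarrow> apply_ops m n s' os)"

text \<open>One round: (operations, pulled arm, observed Bernoulli reward).\<close>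
type_synonym round_rec = "stream_op list \<times> nat \<times> bool"
type_synonym history = "round_rec list"

definition round_step :: "nat \<Rightarrow> nat \<Rightarrow> mem_state \<Rightarrow> stream_op list \<times> nat \<Rightarrow> mem_state option" where
  "round_step m n s act =
     (case apply_ops m n s (fst act) of
        None \<Rightarrow> None
      | Some s' \<Rightarrow> (if snd act \<in> fst s' then Some s' else None))"

fun hist_state_from :: "nat \<Rightarrow> nat \<Rightarrow> mem_state \<Rightarrow> history \<Rightarrow> mem_state option" where
  "hist_state_from m n s [] = Some s"
| "hist_state_from m n s ((ops, a, _) # h) =
     (case round_step m n s (ops, a) of None \<Rightarrow> None | Some s' \<Rightarrow> hist_state_from m n s' h)"

definition hist_state :: "nat \<Rightarrow> nat \<Rightarrow> history \<Rightarrow> mem_state option" where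
  "hist_state m n h = hist_state_from m n init_state h"

text \<open>A (possibly randomized) single-pass streaming algorithm: given the history so far,
  it chooses (randomly) the operations of the current round and the arm to pull.\<close>
type_synonym policy = "history \<Rightarrow> (stream_op list \<times> nat) pmf"

definition valid_alg :: "nat \<Rightarrow> nat \<Rightarrow> policy \<Rightarrow> bool" where
  "valid_alg m n \<pi> \<longleftrightarrow>
     (\<forall>h s. hist_state m n h = Some s \<longrightarrow>
        (\<forall>act \<in> set_pmf (\<pi> h). round_step m n s act \<noteq> None))"

fun run :: "policy \<Rightarrow> (nat \<Rightarrow> real) \<Rightarrow> nat \<Rightarrow> history pmf" where
  "run \<pi> mu 0 = return_pmf []"
| "run \<pi> mu (Suc t) =
     bind_pmf (run \<pi> mu t) (\<lambda>h.
       bind_pmf (\<pi> h) (\<lambda>act.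
         bind_pmf (bernoulli_pmf (mu (snd act))) (\<lambda>b.
           return_pmf (h @ [(fst act, snd act, b)]))))"

definition best_mean :: "nat \<Rightarrow> (nat \<Rightarrow> real) \<Rightarrow> real" where
  "best_mean n mu = Max (mu ` {1..n})"

definition exp_regret :: "policy \<Rightarrow> nat \<Rightarrow> (nat \<Rightarrow> real) \<Rightarrow> nat \<Rightarrow> real" where
  "exp_regret \<pi> n mu T =
     measure_pmf.expectation (run \<pi> mu T)
       (\<lambda>h. \<Sum>x\<leftarrow>h. best_mean n mu - mu (fst (snd x)))"

definition eps :: "real \<Rightarrow> nat \<Rightarrow> nat \<Rightarrow> real" where
  "eps \<alpha> k T = 1/4 * (real k / real T) powr (1 / (2 + 2 * \<alpha>))"

text \<open>nu_inst: the instance nu_i (i = 1 gives nu_1). Only arms 1..n are relevant.\<close>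
definition nu_inst :: "real \<Rightarrow> nat \<Rightarrow> nat \<Rightarrow> nat \<Rightarrow> nat \<Rightarrow> nat \<Rightarrow> real" where
  "nu_inst \<alpha> k n T i j =
     (if 2 \<le> i \<and> j = i then 1/2 + real (n + 1) * eps \<alpha> k T
      else if j = 1 then 1/2 + real n * eps \<alpha> k T
      else if 2 \<le> j \<and> j \<le> k then 1/2 + (real n - 1) * eps \<alpha> k T
      else 1/2)"

definition nu_inst' :: "real \<Rightarrow> nat \<Rightarrow> nat \<Rightarrow> nat \<Rightarrow> nat \<Rightarrow> nat \<Rightarrow> real" where
  "nu_inst' \<alpha> k n T i j =
     (if k + 1 \<le> j \<and> j \<le> n then 1 else nu_inst \<alpha> k n T i j)"

definition f_km :: "real \<Rightarrow> nat \<Rightarrow> nat \<Rightarrow> real" where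
  "f_km \<alpha> k m = 2 / 16 powr (\<alpha> + 1) * (real k - real m + 1) / real k powr (1 / (\<alpha> + 1))"

definition SR :: "real \<Rightarrow> nat \<Rightarrow> nat \<Rightarrow> nat \<Rightarrow> nat \<Rightarrow> policy \<Rightarrow> bool" where
  "SR \<alpha> m k n T \<pi> \<longleftrightarrow>
     (\<forall>i\<in>{1..k}. exp_regret \<pi> n (nu_inst \<alpha> k n T i) T
         \<le> f_km \<alpha> k m * real T powr (1 / (\<alpha> + 1)) * eps \<alpha> k T powr (1 - 2 * \<alpha>)) \<and>
     (\<forall>i\<in>{1..k}. exp_regret \<pi> n (nu_inst' \<alpha> k n T i) T
         \<le> 1/32 * f_km \<alpha> k m * real T powr (1 / (\<alpha> + 1)))"

fun op_trace :: "nat \<Rightarrow> nat \<Rightarrow> mem_state \<Rightarrow> stream_op list \<Rightarrow> mem_state list" where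
  "op_trace m n s [] = [s]"
| "op_trace m n s (op1 # os) =
     s # (case step_op m n s op1 of None \<Rightarrow> [] | Some s' \<Rightarrow> op_trace m n s' os)"

text \<open>Memory at the beginning of stage two: the memory immediately before arm k+1 is read,
  i.e. the last state in the trace with at most k arms read. If arm k+1 is never read
  within the horizon, this is the memory at the end of the last round.\<close>
definition stage2_mem :: "nat \<Rightarrow> nat \<Rightarrow> nat \<Rightarrow> history \<Rightarrow> nat set" where
  "stage2_mem m n k h =
     fst (last (filter (\<lambda>s. snd s \<le> k) (op_trace m n init_state (concat (map fst h)))))"

definition tau_event :: "nat \<Rightarrow> nat \<Rightarrow> nat \<Rightarrow> nat \<Rightarrow> history set" where
  "tau_event m n k i = {h. i \<notin> stage2_mem m n k h}"

end

theory Submission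
  imports Defs
begin

definition inv_st :: "nat \<Rightarrow> mem_state \<Rightarrow> bool" where
  "inv_st n s \<longleftrightarrow> fst s \<subseteq> {1..snd s} \<and> snd s \<le> n"

lemma op_trace_nonempty: "op_trace m n s os \<noteq> []"
  by (induction os arbitrary: s) auto

lemma hd_op_trace: "hd (op_trace m n s os) = s"
  by (cases os) auto

lemma step_op_cases:
  assumes "step_op m n s o1 = Some s'"
  shows "(s' = (insert (Suc (snd s)) (fst s), Suc (snd s)) \<and> snd s < n \<and> card (fst s) < m)
       \<or> (\<exists>j. s' = (fst s - {j}, snd s))"
  using assms by (cases s; cases o1) (auto split: if_splits)

lemma step_op_inv: "step_op m n s o1 = Some s' \<Longrightarrow> inv_st n s \<Longrightarrow> inv_st n s'"
  by (drule step_op_cases) (auto simp: inv_st_def)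

lemma op_trace_append:
  "apply_ops m n s xs = Some s' \<Longrightarrow>
   op_trace m n s (xs @ ys) = butlast (op_trace m n s xs) @ op_trace m n s' ys"
proof (induction xs arbitrary: s)
  case Nil then show ?case by simp
next
  case (Cons o1 xs)
  then obtain s1 where s1: "step_op m n s o1 = Some s1" and r: "apply_ops m n s1 xs = Some s'"
    by (auto split: option.splits)
  show ?case using Cons.IH[OF r] s1 op_trace_nonempty[of m n s1 xs] by simp
qed

lemma last_op_trace: "apply_ops m n s xs = Some s' \<Longrightarrow> last (op_trace m n s xs) = s'"
proof (induction xs arbitrary: s)
  case Nil then show ?case by simp
next
  case (Cons o1 xs)
  then obtain s1 where s1: "step_op m n s o1 = Some s1" and r: "apply_ops m n s1 xs = Some s'"
    by (auto split: option.splits)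
  show ?case using Cons.IH[OF r] s1 op_trace_nonempty[of m n s1 xs] by simp
qed

lemma op_trace_mono: "q \<in> set (op_trace m n s os) \<Longrightarrow> snd s \<le> snd q"
proof (induction os arbitrary: s)
  case Nil then show ?case by simp
next
  case (Cons o1 os)
  show ?case
  proof (cases "step_op m n s o1")
    case None then show ?thesis using Cons by simp
  next
    case (Some s1)
    have "snd s \<le> snd s1" using step_op_cases[OF Some] by auto
    moreover have "q = s \<or> q \<in> set (op_trace m n s1 os)" using Cons.prems Some by auto
    ultimately show ?thesis using Cons.IH[of s1] by auto
  qed
qed

lemma op_trace_inv: "q \<in> set (op_trace m n s os) \<Longrightarrow> inv_st n s \<Longrightarrow> inv_st n q"
proof (induction os arbitrary: s)
  case Nil then show ?case by simp
next
  case (Cons o1 os)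
  show ?case
  proof (cases "step_op m n s o1")
    case None then show ?thesis using Cons by simp
  next
    case (Some s1)
    have "q = s \<or> q \<in> set (op_trace m n s1 os)" using Cons.prems Some by auto
    then show ?thesis using Cons.IH[of s1] Cons.prems step_op_inv[OF Some] by auto
  qed
qed

lemma op_trace_H:
  "i \<notin> fst s \<Longrightarrow> i \<le> snd s \<Longrightarrow> q \<in> set (op_trace m n s os) \<Longrightarrow> i \<notin> fst q"
proof (induction os arbitrary: s)
  case Nil then show ?case by simp
next
  case (Cons o1 os)
  show ?case
  proof (cases "step_op m n s o1")
    case None then show ?thesis using Cons by simp
  next
    case (Some s1)
    have "i \<notin> fst s1 \<and> i \<le> snd s1" using step_op_cases[OF Some] Cons.prems by auto
    moreover have "q = s \<or> q \<in> set (op_trace m n s1 os)" using Cons.prems Some by auto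
    ultimately show ?thesis using Cons.IH[of s1] Cons.prems by auto
  qed
qed

lemma op_trace_G:
  "snd s \<le> k \<Longrightarrow> i \<le> k \<Longrightarrow> q \<in> set (op_trace m n s os) \<Longrightarrow> k < snd q \<Longrightarrow>
   i \<notin> fst (last (filter (\<lambda>s. snd s \<le> k) (op_trace m n s os))) \<Longrightarrow> i \<notin> fst q"
proof (induction os arbitrary: s)
  case Nil then show ?case by simp
next
  case (Cons o1 os)
  show ?case
  proof (cases "step_op m n s o1")
    case None then show ?thesis using Cons by simp
  next
    case (Some s1)
    show ?thesis
    proof (cases "snd s1 \<le> k")
      case True
      have ne: "filter (\<lambda>s. snd s \<le> k) (op_trace m n s1 os) \<noteq> []"
        using True hd_op_trace[of m n s1 os] op_trace_nonempty[of m n s1 os]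
        by (cases "op_trace m n s1 os") auto
      have "q \<in> set (op_trace m n s1 os)" using Cons.prems Some by auto
      then show ?thesis using Cons.IH[OF True Cons.prems(2)] Cons.prems Some ne by simp
    next
      case False
      have "\<forall>x\<in>set (op_trace m n s1 os). \<not> snd x \<le> k"
        using op_trace_mono[of _ m n s1 os] False by fastforce
      then have fe: "filter (\<lambda>s. snd s \<le> k) (op_trace m n s1 os) = []" by (simp add: filter_empty_conv)
      have "i \<notin> fst s" using Cons.prems Some fe by simp
      moreover have s1: "s1 = (insert (Suc (snd s)) (fst s), Suc (snd s))"
        using step_op_cases[OF Some] False Cons.prems(1) by auto
      moreover have "q \<in> set (op_trace m n s1 os)" using Cons.prems Some by auto
      ultimately show ?thesis using op_trace_H[of i s1] Cons.prems False by auto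
    qed
  qed
qed

lemma round_step_Some:
  "round_step m n s (ops, a) = Some s' \<longleftrightarrow> apply_ops m n s ops = Some s' \<and> a \<in> fst s'"
  by (auto simp: round_step_def split: option.splits)

lemma apply_ops_inv: "apply_ops m n s xs = Some s' \<Longrightarrow> inv_st n s \<Longrightarrow> inv_st n s'"
proof (induction xs arbitrary: s)
  case Nil then show ?case by simp
next
  case (Cons o1 xs)
  then obtain s1 where s1: "step_op m n s o1 = Some s1" and r: "apply_ops m n s1 xs = Some s'"
    by (auto split: option.splits)
  show ?case using Cons.IH[OF r] step_op_inv[OF s1] Cons.prems by simp
qed

lemma hist_state_from_Cons:
  "hist_state_from m n s ((ops, a, b) # h) = Some e \<longleftrightarrow>
   (\<exists>s'. round_step m n s (ops, a) = Some s' \<and> hist_state_from m n s' h = Some e)"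
  by (auto split: option.splits)

lemma hist_state_from_snoc:
  "hist_state_from m n s (h @ [(ops, a, b)]) =
   (case hist_state_from m n s h of None \<Rightarrow> None | Some e \<Rightarrow> round_step m n e (ops, a))"
proof (induction h arbitrary: s)
  case Nil then show ?case by (simp split: option.splits)
next
  case (Cons x h)
  obtain ops' a' b' where x: "x = (ops', a', b')" by (cases x)
  show ?case using Cons by (simp add: x split: option.splits)
qed

lemma hsf_ConsE:
  assumes "hist_state_from m n s ((ops, a, b) # h) = Some e"
  obtains s' where "round_step m n s (ops, a) = Some s'" "hist_state_from m n s' h = Some e"
  using assms by (cases "round_step m n s (ops, a)") auto

fun Lf :: "nat \<Rightarrow> nat \<Rightarrow> nat \<Rightarrow> mem_state \<Rightarrow> history \<Rightarrow> nat" where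
  "Lf m n k s [] = 0"
| "Lf m n k s ((ops, a, b) # h) =
     (case round_step m n s (ops, a) of None \<Rightarrow> 0
      | Some s' \<Rightarrow> if snd s' \<le> k then Suc (Lf m n k s' h) else 0)"

lemma Lf_le: "Lf m n k s h \<le> length h"
  by (induction m n k s h rule: Lf.induct) (auto split: option.splits)

lemma Lf_snoc:
  "hist_state_from m n s h = Some e \<Longrightarrow>
   Lf m n k s (h @ [(ops, a, b)]) =
     (if Lf m n k s h = length h then
        (case round_step m n e (ops, a) of None \<Rightarrow> length h
         | Some s' \<Rightarrow> if snd s' \<le> k then Suc (length h) else length h)
      else Lf m n k s h)"
proof (induction h arbitrary: s)
  case Nil then show ?case by (simp split: option.splits)
next
  case (Cons x h)
  obtain ops' a' b' where x: "x = (ops', a', b')" by (cases x)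
  from Cons.prems obtain s' where s': "round_step m n s (ops', a') = Some s'"
    and h: "hist_state_from m n s' h = Some e" using hsf_ConsE[of m n s ops' a' b' h e] Cons.prems unfolding x by blast
  show ?case using Cons.IH[OF h] s' Lf_le[of m n k s' h] by (auto simp: x split: option.splits)
qed

lemma P3:
  "hist_state_from m n s h = Some e \<Longrightarrow> x \<in> set h \<Longrightarrow>
   \<exists>q\<in>set (op_trace m n s (concat (map fst h))). fst (snd x) \<in> fst q"
proof (induction h arbitrary: s)
  case Nil then show ?case by simp
next
  case (Cons y h)
  obtain ops a b where y: "y = (ops, a, b)" by (cases y)
  from Cons.prems obtain s' where s': "round_step m n s (ops, a) = Some s'"
    and h: "hist_state_from m n s' h = Some e" using hsf_ConsE[of m n s ops a b h e] Cons.prems(1) unfolding y by blast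
  have ap: "apply_ops m n s ops = Some s'" and a: "a \<in> fst s'" using s' by (auto simp: round_step_Some)
  have tr: "op_trace m n s (concat (map fst (y # h))) =
      butlast (op_trace m n s ops) @ op_trace m n s' (concat (map fst h))"
    using op_trace_append[OF ap] by (simp add: y)
  have hd': "s' \<in> set (op_trace m n s' (concat (map fst h)))"
    using hd_op_trace[of m n s'] op_trace_nonempty[of m n s'] by (metis list.set_sel(1))
  show ?case
  proof (cases "x = y")
    case True then show ?thesis using tr hd' a by (auto simp: y)
  next
    case False
    then have "x \<in> set h" using Cons.prems by simp
    then show ?thesis using Cons.IH[OF h] tr by auto
  qed
qed

lemma sum_list_ge_const:
  "(\<forall>x\<in>set xs. c \<le> f x) \<Longrightarrow> c * real (length xs) \<le> (\<Sum>x\<leftarrow>xs. (f x :: real))"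
  by (induction xs) (auto simp: algebra_simps)

lemma Bprime:
  assumes "\<And>j. j \<in> {1..n} \<Longrightarrow> 0 \<le> g j" "\<And>j. j \<in> {1..k} \<Longrightarrow> c \<le> (g j :: real)"
  shows "hist_state_from m n s h = Some e \<Longrightarrow> inv_st n s \<Longrightarrow>
         c * real (Lf m n k s h) \<le> (\<Sum>x\<leftarrow>h. g (fst (snd x)))"
proof (induction h arbitrary: s)
  case Nil then show ?case by simp
next
  case (Cons y h)
  obtain ops a b where y: "y = (ops, a, b)" by (cases y)
  from Cons.prems obtain s' where s': "round_step m n s (ops, a) = Some s'"
    and h: "hist_state_from m n s' h = Some e" using hsf_ConsE[of m n s ops a b h e] Cons.prems(1) unfolding y by blast
  have ap: "apply_ops m n s ops = Some s'" and a: "a \<in> fst s'" using s' by (auto simp: round_step_Some)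
  have inv': "inv_st n s'" using apply_ops_inv[OF ap Cons.prems(2)] .
  have IH: "c * real (Lf m n k s' h) \<le> (\<Sum>x\<leftarrow>h. g (fst (snd x)))" using Cons.IH[OF h inv'] .
  have a1: "a \<in> {1..n}" using a inv' by (auto simp: inv_st_def)
  show ?case
  proof (cases "snd s' \<le> k")
    case True
    have "a \<in> {1..k}" using a inv' True by (auto simp: inv_st_def)
    then have "c \<le> g a" using assms(2) by simp
    then show ?thesis using IH True s' by (simp add: y algebra_simps)
  next
    case False
    have "0 \<le> (\<Sum>x\<leftarrow>h. g (fst (snd x)))"
    proof -
      have "\<forall>x\<in>set h. 0 \<le> g (fst (snd x))"
      proof
        fix x assume "x \<in> set h"
        then obtain q where q: "q \<in> set (op_trace m n s' (concat (map fst h)))" "fst (snd x) \<in> fst q"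
          using P3[OF h] by blast
        have "inv_st n q" using op_trace_inv[OF q(1) inv'] .
        then show "0 \<le> g (fst (snd x))" using q(2) assms(1) by (auto simp: inv_st_def)
      qed
      then show ?thesis using sum_list_ge_const[of h 0] by simp
    qed
    then show ?thesis using False s' assms(1)[OF a1] by (simp add: y)
  qed
qed

lemma Bmain:
  assumes g0: "\<And>j. j \<in> {1..n} \<Longrightarrow> 0 \<le> g j"
    and geps: "\<And>j. j \<in> {1..n} \<Longrightarrow> j \<noteq> i \<Longrightarrow> \<epsilon> \<le> (g j :: real)"
    and ik: "i \<le> k"
  shows "hist_state_from m n s h = Some e \<Longrightarrow> inv_st n s \<Longrightarrow> snd s \<le> k \<Longrightarrow>
    i \<notin> fst (last (filter (\<lambda>s. snd s \<le> k) (op_trace m n s (concat (map fst h))))) \<Longrightarrow>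
    \<epsilon> * (real (length h) - real (Lf m n k s h)) \<le> (\<Sum>x\<leftarrow>h. g (fst (snd x)))"
proof (induction h arbitrary: s)
  case Nil then show ?case by simp
next
  case (Cons y h)
  obtain ops a b where y: "y = (ops, a, b)" by (cases y)
  from Cons.prems obtain s' where s': "round_step m n s (ops, a) = Some s'"
    and h: "hist_state_from m n s' h = Some e"
    using hsf_ConsE[of m n s ops a b h e] Cons.prems(1) unfolding y by blast
  have ap: "apply_ops m n s ops = Some s'" and a: "a \<in> fst s'" using s' by (auto simp: round_step_Some)
  have inv': "inv_st n s'" using apply_ops_inv[OF ap Cons.prems(2)] .
  have a1: "a \<in> {1..n}" using a inv' by (auto simp: inv_st_def)
  define tr' where "tr' = op_trace m n s' (concat (map fst h))"
  have tr: "op_trace m n s (concat (map fst (y # h))) = butlast (op_trace m n s ops) @ tr'"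
    using op_trace_append[OF ap] by (simp add: y tr'_def)
  have hd': "s' \<in> set tr'"
    unfolding tr'_def using hd_op_trace[of m n s'] op_trace_nonempty[of m n s'] by (metis list.set_sel(1))
  show ?case
  proof (cases "snd s' \<le> k")
    case True
    have ne: "filter (\<lambda>s. snd s \<le> k) tr' \<noteq> []"
      using hd' True by (auto simp: filter_empty_conv)
    have "last (filter (\<lambda>s. snd s \<le> k) (op_trace m n s (concat (map fst (y # h)))))
        = last (filter (\<lambda>s. snd s \<le> k) tr')" using tr ne by simp
    then have tau: "i \<notin> fst (last (filter (\<lambda>s. snd s \<le> k) tr'))" using Cons.prems(4) by simp
    have IH: "\<epsilon> * (real (length h) - real (Lf m n k s' h)) \<le> (\<Sum>x\<leftarrow>h. g (fst (snd x)))"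
      using Cons.IH[OF h inv' True] tau unfolding tr'_def by simp
    have "0 \<le> g a" using g0 a1 by simp
    then show ?thesis using IH True s' by (simp add: y algebra_simps)
  next
    case False
    have all: "\<forall>x\<in>set (y # h). \<epsilon> \<le> g (fst (snd x))"
    proof
      fix x assume x: "x \<in> set (y # h)"
      have "\<exists>q\<in>set tr'. fst (snd x) \<in> fst q \<and> k < snd q"
      proof (cases "x = y")
        case True then show ?thesis using hd' a False by (auto simp: y)
      next
        case F: False
        then have "x \<in> set h" using x by simp
        then obtain q where q: "q \<in> set tr'" "fst (snd x) \<in> fst q"
          using P3[OF h] unfolding tr'_def by blast
        have "snd s' \<le> snd q" using op_trace_mono q(1) unfolding tr'_def by blast
        then show ?thesis using q False by auto
      qed
      then obtain q where q: "q \<in> set tr'" "fst (snd x) \<in> fst q" "k < snd q" by blast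
      have qin: "q \<in> set (op_trace m n s (concat (map fst (y # h))))" using tr q(1) by simp
      have "i \<notin> fst q" using op_trace_G[OF Cons.prems(3) ik qin q(3) Cons.prems(4)] .
      moreover have "inv_st n q" using op_trace_inv[OF qin Cons.prems(2)] .
      ultimately have "fst (snd x) \<in> {1..n}" "fst (snd x) \<noteq> i" using q(2) by (auto simp: inv_st_def)
      then show "\<epsilon> \<le> g (fst (snd x))" using geps by blast
    qed
    have "\<epsilon> * real (length (y # h)) \<le> (\<Sum>x\<leftarrow>y # h. g (fst (snd x)))"
      using sum_list_ge_const[OF all] by (simp add: mult.commute)
    then show ?thesis using False s' by (simp add: y)
  qed
qed

lemma run_legal:
  assumes "valid_alg m n \<pi>"
  shows "h \<in> set_pmf (run \<pi> mu t) \<Longrightarrow> (\<exists>e. hist_state m n h = Some e) \<and> length h = t"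
proof (induction t arbitrary: h)
  case 0 then show ?case by (simp add: hist_state_def)
next
  case (Suc t)
  from Suc.prems obtain h0 act b where h0: "h0 \<in> set_pmf (run \<pi> mu t)" and act: "act \<in> set_pmf (\<pi> h0)"
    and h: "h = h0 @ [(fst act, snd act, b)]" by auto
  obtain e where e: "hist_state m n h0 = Some e" and l: "length h0 = t" using Suc.IH[OF h0] by blast
  have "round_step m n e act \<noteq> None" using assms e act unfolding valid_alg_def by blast
  then show ?case using e l h hist_state_from_snoc[of m n init_state h0 "fst act" "snd act" b]
    by (auto simp: hist_state_def split: option.splits)
qed

definition stopH :: "nat \<Rightarrow> nat \<Rightarrow> nat \<Rightarrow> history \<Rightarrow> history" where
  "stopH m n k h = take (Lf m n k init_state h) h"

lemma length_stopH: "length (stopH m n k h) = Lf m n k init_state h"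
  using Lf_le[of m n k init_state h] by (simp add: stopH_def)

lemma stopH_snoc:
  assumes "hist_state m n h = Some e"
  shows "stopH m n k (h @ [(ops, a, b)]) =
     (if Lf m n k init_state h = length h then
        (case round_step m n e (ops, a) of None \<Rightarrow> h
         | Some s' \<Rightarrow> if snd s' \<le> k then h @ [(ops, a, b)] else h)
      else stopH m n k h)"
  using Lf_snoc[of m n init_state h e k ops a b] assms Lf_le[of m n k init_state h]
  by (auto simp: stopH_def hist_state_def split: option.splits)

lemma coupling:
  assumes valid: "valid_alg m n \<pi>" and agree: "\<And>j. j \<le> k \<Longrightarrow> mu j = mu' j"
  shows "map_pmf (stopH m n k) (run \<pi> mu t) = map_pmf (stopH m n k) (run \<pi> mu' t)"
proof (induction t)
  case 0 then show ?case by simp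
next
  case (Suc t)
  define F where "F = (\<lambda>\<mu> h. bind_pmf (\<pi> h) (\<lambda>act.
         bind_pmf (bernoulli_pmf (\<mu> (snd act))) (\<lambda>b.
           return_pmf (h @ [(fst act, snd act, b)]))))"
  define K where "K = (\<lambda>\<mu> g. if length g < t then return_pmf g else map_pmf (stopH m n k) (F \<mu> g))"
  have runS: "run \<pi> \<mu> (Suc t) = bind_pmf (run \<pi> \<mu> t) (F \<mu>)" for \<mu>
    by (simp add: F_def)
  have claim1: "map_pmf (stopH m n k) (F \<mu> h) = K \<mu> (stopH m n k h)"
    if h: "h \<in> set_pmf (run \<pi> \<mu> t)" for \<mu> h
  proof -
    obtain e where e: "hist_state m n h = Some e" and l: "length h = t"
      using run_legal[OF valid h] by blast
    show ?thesis
    proof (cases "Lf m n k init_state h = length h")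
      case True
      then have "stopH m n k h = h" by (simp add: stopH_def)
      then show ?thesis using l by (simp add: K_def)
    next
      case False
      then have lt: "Lf m n k init_state h < t" using Lf_le[of m n k init_state h] l by simp
      have "map_pmf (stopH m n k) (F \<mu> h) = return_pmf (stopH m n k h)"
        unfolding F_def using stopH_snoc[OF e] False
        by (simp add: map_bind_pmf)
      then show ?thesis using lt by (simp add: K_def length_stopH)
    qed
  qed
  have step: "map_pmf (stopH m n k) (run \<pi> \<mu> (Suc t)) = bind_pmf (map_pmf (stopH m n k) (run \<pi> \<mu> t)) (K \<mu>)" for \<mu>
  proof -
    have "map_pmf (stopH m n k) (run \<pi> \<mu> (Suc t)) = bind_pmf (run \<pi> \<mu> t) (\<lambda>h. map_pmf (stopH m n k) (F \<mu> h))"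
      by (simp only: runS map_bind_pmf)
    also have "\<dots> = bind_pmf (run \<pi> \<mu> t) (\<lambda>h. K \<mu> (stopH m n k h))"
      by (rule bind_pmf_cong) (auto intro: claim1)
    also have "\<dots> = bind_pmf (map_pmf (stopH m n k) (run \<pi> \<mu> t)) (K \<mu>)"
      by (simp add: bind_map_pmf)
    finally show ?thesis .
  qed
  have KK: "K mu g = K mu' g" if g: "g \<in> set_pmf (map_pmf (stopH m n k) (run \<pi> mu' t))" for g
  proof (cases "length g < t")
    case True then show ?thesis by (simp add: K_def)
  next
    case False
    from g obtain h where h: "h \<in> set_pmf (run \<pi> mu' t)" and gh: "g = stopH m n k h" by auto
    obtain e where e: "hist_state m n h = Some e" and l: "length h = t"
      using run_legal[OF valid h] by blast
    have L: "Lf m n k init_state h = length h"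
      using False gh l length_stopH[of m n k h] Lf_le[of m n k init_state h] by simp
    then have gh': "g = h" using gh by (simp add: stopH_def)
    have eqact: "map_pmf (stopH m n k) (bind_pmf (bernoulli_pmf (mu (snd act)))
              (\<lambda>b. return_pmf (h @ [(fst act, snd act, b)]))) =
            map_pmf (stopH m n k) (bind_pmf (bernoulli_pmf (mu' (snd act)))
              (\<lambda>b. return_pmf (h @ [(fst act, snd act, b)])))"
      if act: "act \<in> set_pmf (\<pi> h)" for act
    proof -
      obtain ops a where act': "act = (ops, a)" by (cases act)
      obtain s' where s': "round_step m n e (ops, a) = Some s'"
        using valid e act unfolding valid_alg_def act' by blast
      show ?thesis
      proof (cases "snd s' \<le> k")
        case True
        have ap: "apply_ops m n e ops = Some s'" and a: "a \<in> fst s'" using s' by (auto simp: round_step_Some)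
        have inv_e: "inv_st n e"
        proof -
          have "inv_st n init_state" by (simp add: inv_st_def init_state_def)
          moreover have "\<And>h s e. hist_state_from m n s h = Some e \<Longrightarrow> inv_st n s \<Longrightarrow> inv_st n e"
          proof -
            fix h s e show "hist_state_from m n s h = Some e \<Longrightarrow> inv_st n s \<Longrightarrow> inv_st n e"
            proof (induction h arbitrary: s)
              case Nil then show ?case by simp
            next
              case (Cons y h)
              obtain ops a b where y: "y = (ops, a, b)" by (cases y)
              from Cons.prems obtain s' where s': "round_step m n s (ops, a) = Some s'"
                and h: "hist_state_from m n s' h = Some e"
                using hsf_ConsE[of m n s ops a b h e] Cons.prems(1) unfolding y by blast
              have "apply_ops m n s ops = Some s'" using s' by (auto simp: round_step_Some)
              then show ?case using Cons.IH[OF h] apply_ops_inv Cons.prems(2) by blast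
            qed
          qed
          ultimately show ?thesis using e unfolding hist_state_def by blast
        qed
        have "a \<le> k" using apply_ops_inv[OF ap inv_e] a True by (auto simp: inv_st_def)
        then show ?thesis using agree act' by simp
      next
        case False
        have "stopH m n k (h @ [(ops, a, b)]) = h" for b
          using stopH_snoc[OF e, where k=k and ops=ops and a=a and b=b] L s' False by simp
        then show ?thesis by (simp add: act' map_bind_pmf)
      qed
    qed
    have "map_pmf (stopH m n k) (F mu h) = bind_pmf (\<pi> h) (\<lambda>act. map_pmf (stopH m n k) (bind_pmf (bernoulli_pmf (mu (snd act)))
              (\<lambda>b. return_pmf (h @ [(fst act, snd act, b)]))))"
      unfolding F_def by (rule map_bind_pmf)
    also have "\<dots> = bind_pmf (\<pi> h) (\<lambda>act. map_pmf (stopH m n k) (bind_pmf (bernoulli_pmf (mu' (snd act)))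
              (\<lambda>b. return_pmf (h @ [(fst act, snd act, b)]))))"
      by (rule bind_pmf_cong[OF refl]) (rule eqact)
    also have "\<dots> = map_pmf (stopH m n k) (F mu' h)"
      unfolding F_def by (rule map_bind_pmf[symmetric])
    finally show ?thesis using False gh' by (simp add: K_def)
  qed
  have "map_pmf (stopH m n k) (run \<pi> mu (Suc t)) = bind_pmf (map_pmf (stopH m n k) (run \<pi> mu' t)) (K mu)"
    using step[of mu] Suc.IH by simp
  also have "\<dots> = bind_pmf (map_pmf (stopH m n k) (run \<pi> mu' t)) (K mu')"
    by (rule bind_pmf_cong) (auto intro: KK)
  also have "\<dots> = map_pmf (stopH m n k) (run \<pi> mu' (Suc t))" using step[of mu'] by simp
  finally show ?case .
qed

lemma int_pmf_bound:
  fixes f :: "'a \<Rightarrow> real"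
  assumes "\<And>x. x \<in> set_pmf p \<Longrightarrow> \<bar>f x\<bar> \<le> B"
  shows "integrable (measure_pmf p) f"
  by (rule measure_pmf.integrable_const_bound[where B=B]) (auto simp: AE_measure_pmf_iff assms)

lemma abs_sum_list_le:
  "(\<And>x. \<bar>f x\<bar> \<le> B) \<Longrightarrow> \<bar>\<Sum>x\<leftarrow>xs. (f x :: real)\<bar> \<le> real (length xs) * B"
proof (induction xs)
  case Nil then show ?case by simp
next
  case (Cons x xs)
  have "\<bar>\<Sum>x\<leftarrow>x # xs. f x\<bar> \<le> \<bar>f x\<bar> + \<bar>\<Sum>x\<leftarrow>xs. f x\<bar>" by (simp add: abs_triangle_ineq)
  also have "\<dots> \<le> B + real (length xs) * B" using Cons by (intro add_mono) auto
  finally show ?case by (simp add: algebra_simps)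
qed

lemma inv_init: "inv_st n init_state" by (simp add: inv_st_def init_state_def)

lemma regret_integrable:
  assumes valid: "valid_alg m n \<pi>" and bnd: "\<And>j. \<bar>mu j\<bar> \<le> M"
  shows "integrable (measure_pmf (run \<pi> mu T)) (\<lambda>h. \<Sum>x\<leftarrow>h. best_mean n mu - mu (fst (snd x)))"
proof (rule int_pmf_bound)
  fix h assume h: "h \<in> set_pmf (run \<pi> mu T)"
  have l: "length h = T" using run_legal[OF valid h] by blast
  have "\<bar>best_mean n mu - mu j\<bar> \<le> \<bar>best_mean n mu\<bar> + M" for j
    using bnd[of j] by linarith
  then show "\<bar>\<Sum>x\<leftarrow>h. best_mean n mu - mu (fst (snd x))\<bar> \<le> real T * (\<bar>best_mean n mu\<bar> + M)"
    using abs_sum_list_le[of "\<lambda>x. best_mean n mu - mu (fst (snd x))" "\<bar>best_mean n mu\<bar> + M" h] l by simp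
qed

lemma L_integrable:
  assumes valid: "valid_alg m n \<pi>"
  shows "integrable (measure_pmf (run \<pi> mu T)) (\<lambda>h. real (Lf m n k init_state h))"
proof (rule int_pmf_bound)
  fix h assume h: "h \<in> set_pmf (run \<pi> mu T)"
  have l: "length h = T" using run_legal[OF valid h] by blast
  show "\<bar>real (Lf m n k init_state h)\<bar> \<le> real T" using Lf_le[of m n k init_state h] l by simp
qed

lemma exp_lower_nu:
  assumes valid: "valid_alg m n \<pi>" and bnd: "\<And>j. \<bar>mu j\<bar> \<le> M"
    and g0: "\<And>j. j \<in> {1..n} \<Longrightarrow> 0 \<le> best_mean n mu - mu j"
    and geps: "\<And>j. j \<in> {1..n} \<Longrightarrow> j \<noteq> i \<Longrightarrow> \<epsilon> \<le> best_mean n mu - mu j"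
    and ik: "i \<le> k" and eps0: "0 \<le> \<epsilon>"
  shows "\<epsilon> * (real T * measure_pmf.prob (run \<pi> mu T) (tau_event m n k i)
            - measure_pmf.expectation (run \<pi> mu T) (\<lambda>h. real (Lf m n k init_state h)))
         \<le> exp_regret \<pi> n mu T"
proof -
  let ?p = "run \<pi> mu T"
  let ?L = "\<lambda>h. real (Lf m n k init_state h)"
  let ?I = "\<lambda>h. indicator (tau_event m n k i) h :: real"
  have intI: "integrable (measure_pmf ?p) ?I"
    by (rule int_pmf_bound[where B=1]) (auto simp: indicator_def)
  have intL: "integrable (measure_pmf ?p) ?L" by (rule L_integrable[OF valid])
  have "measure_pmf.expectation ?p (\<lambda>h. \<epsilon> * (real T * ?I h - ?L h))
      = \<epsilon> * (real T * measure_pmf.expectation ?p ?I - measure_pmf.expectation ?p ?L)"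
    using intI intL by (simp add: integral_diff)
  also have "measure_pmf.expectation ?p ?I = measure_pmf.prob ?p (tau_event m n k i)"
    by simp
  finally have eq: "measure_pmf.expectation ?p (\<lambda>h. \<epsilon> * (real T * ?I h - ?L h))
      = \<epsilon> * (real T * measure_pmf.prob ?p (tau_event m n k i) - measure_pmf.expectation ?p ?L)" .
  have "measure_pmf.expectation ?p (\<lambda>h. \<epsilon> * (real T * ?I h - ?L h))
      \<le> measure_pmf.expectation ?p (\<lambda>h. \<Sum>x\<leftarrow>h. best_mean n mu - mu (fst (snd x)))"
  proof (rule integral_mono_AE)
    show "integrable (measure_pmf ?p) (\<lambda>h. \<epsilon> * (real T * ?I h - ?L h))"
      using intI intL by simp
    show "integrable (measure_pmf ?p) (\<lambda>h. \<Sum>x\<leftarrow>h. best_mean n mu - mu (fst (snd x)))"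
      by (rule regret_integrable[OF valid bnd])
    show "AE h in measure_pmf ?p. \<epsilon> * (real T * ?I h - ?L h) \<le> (\<Sum>x\<leftarrow>h. best_mean n mu - mu (fst (snd x)))"
    proof (rule AE_pmfI)
      fix h assume h: "h \<in> set_pmf ?p"
      obtain e where e: "hist_state_from m n init_state h = Some e" and l: "length h = T"
        using run_legal[OF valid h] unfolding hist_state_def by blast
      have B0: "0 \<le> (\<Sum>x\<leftarrow>h. best_mean n mu - mu (fst (snd x)))"
        using Bprime[of n "\<lambda>j. best_mean n mu - mu j" n 0, OF g0 g0 e inv_init] by simp
      show "\<epsilon> * (real T * ?I h - ?L h) \<le> (\<Sum>x\<leftarrow>h. best_mean n mu - mu (fst (snd x)))"
      proof (cases "h \<in> tau_event m n k i")
        case True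
        then have tau: "i \<notin> fst (last (filter (\<lambda>s. snd s \<le> k) (op_trace m n init_state (concat (map fst h)))))"
          by (simp add: tau_event_def stage2_mem_def)
        have "\<epsilon> * (real (length h) - ?L h) \<le> (\<Sum>x\<leftarrow>h. best_mean n mu - mu (fst (snd x)))"
          using Bmain[of n "\<lambda>j. best_mean n mu - mu j" i \<epsilon> k m init_state h e, OF g0 geps ik e inv_init]
            tau by (simp add: init_state_def)
        then show ?thesis using True l by simp
      next
        case False
        have "\<epsilon> * (real T * ?I h - ?L h) = - (\<epsilon> * ?L h)" using False by simp
        also have "\<dots> \<le> 0" using eps0 by simp
        finally show ?thesis using B0 by linarith
      qed
    qed
  qed
  then show ?thesis unfolding eq exp_regret_def .
qed

lemma exp_lower_nu':
  assumes valid: "valid_alg m n \<pi>" and bnd: "\<And>j. \<bar>mu j\<bar> \<le> M"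
    and g0: "\<And>j. j \<in> {1..n} \<Longrightarrow> 0 \<le> best_mean n mu - mu j"
    and gc: "\<And>j. j \<in> {1..k} \<Longrightarrow> c \<le> best_mean n mu - mu j"
  shows "c * measure_pmf.expectation (run \<pi> mu T) (\<lambda>h. real (Lf m n k init_state h))
         \<le> exp_regret \<pi> n mu T"
proof -
  let ?p = "run \<pi> mu T"
  let ?L = "\<lambda>h. real (Lf m n k init_state h)"
  have intL: "integrable (measure_pmf ?p) ?L" by (rule L_integrable[OF valid])
  have "measure_pmf.expectation ?p (\<lambda>h. c * ?L h)
      \<le> measure_pmf.expectation ?p (\<lambda>h. \<Sum>x\<leftarrow>h. best_mean n mu - mu (fst (snd x)))"
  proof (rule integral_mono_AE)
    show "integrable (measure_pmf ?p) (\<lambda>h. c * ?L h)" using intL by simp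
    show "integrable (measure_pmf ?p) (\<lambda>h. \<Sum>x\<leftarrow>h. best_mean n mu - mu (fst (snd x)))"
      by (rule regret_integrable[OF valid bnd])
    show "AE h in measure_pmf ?p. c * ?L h \<le> (\<Sum>x\<leftarrow>h. best_mean n mu - mu (fst (snd x)))"
    proof (rule AE_pmfI)
      fix h assume h: "h \<in> set_pmf ?p"
      obtain e where e: "hist_state_from m n init_state h = Some e"
        using run_legal[OF valid h] unfolding hist_state_def by blast
      show "c * ?L h \<le> (\<Sum>x\<leftarrow>h. best_mean n mu - mu (fst (snd x)))"
        using Bprime[of n "\<lambda>j. best_mean n mu - mu j" k c, OF g0 gc e inv_init] by simp
    qed
  qed
  then show ?thesis by (simp add: exp_regret_def)
qed

lemma EL_eq:
  assumes valid: "valid_alg m n \<pi>" and agree: "\<And>j. j \<le> k \<Longrightarrow> mu j = mu' j"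
  shows "measure_pmf.expectation (run \<pi> mu T) (\<lambda>h. real (Lf m n k init_state h))
       = measure_pmf.expectation (run \<pi> mu' T) (\<lambda>h. real (Lf m n k init_state h))"
proof -
  have "measure_pmf.expectation (run \<pi> mu T) (\<lambda>h. real (Lf m n k init_state h))
      = measure_pmf.expectation (map_pmf (stopH m n k) (run \<pi> mu T)) (\<lambda>g. real (length g))"
    by (simp add: length_stopH)
  also have "\<dots> = measure_pmf.expectation (map_pmf (stopH m n k) (run \<pi> mu' T)) (\<lambda>g. real (length g))"
    using coupling[OF valid agree] by simp
  also have "\<dots> = measure_pmf.expectation (run \<pi> mu' T) (\<lambda>h. real (Lf m n k init_state h))"
    by (simp add: length_stopH)
  finally show ?thesis .
qed



lemma arith1:
  fixes \<alpha> kk TT Q0 :: real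
  assumes a1: "1 \<le> \<alpha>" and kk: "0 < kk" and TT: "0 < TT"
  shows "(2 / 16 powr (\<alpha>+1) * Q0 / kk powr (1/(\<alpha>+1))) * TT powr (1/(\<alpha>+1))
           * (1/4 * (kk/TT) powr (1/(2+2*\<alpha>))) powr (1-2*\<alpha>)
         = 1/8 * (Q0/kk) * (1/4 * (kk/TT) powr (1/(2+2*\<alpha>))) * TT"
proof -
  define a where "a = 1/(2+2*\<alpha>)"
  define l2 where "l2 = ln (2::real)"
  define K where "K = ln kk"
  define L where "L = ln TT"
  have e1: "16 powr (\<alpha>+1) = exp ((\<alpha>+1)*(4*l2))"
  proof -
    have "ln (16::real) = 4 * l2" unfolding l2_def
      using ln_realpow[of 2 4] by simp
    then show ?thesis by (simp add: powr_def)
  qed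
  have e2: "kk powr (1/(\<alpha>+1)) = exp (K/(\<alpha>+1))" using kk by (simp add: powr_def K_def)
  have e3: "TT powr (1/(\<alpha>+1)) = exp (L/(\<alpha>+1))" using TT by (simp add: powr_def L_def)
  have e5: "1/4 * (kk/TT) powr a = exp (a*(K - L) - 2*l2)"
  proof -
    have "(kk/TT) powr a = exp (a*(K-L))" using kk TT by (simp add: powr_def K_def L_def ln_div)
    moreover have "exp (2*l2) = 4"
    proof -
      have "exp (2*l2) = exp (l2 + l2)" by (simp only: mult_2)
      also have "\<dots> = exp l2 * exp l2" by (simp only: exp_add)
      also have "\<dots> = 4" by (simp add: l2_def)
      finally show ?thesis .
    qed
    ultimately show ?thesis by (simp add: exp_diff)
  qed
  have e6: "(exp (a*(K - L) - 2*l2)) powr (1-2*\<alpha>) = exp ((1-2*\<alpha>)*(a*(K - L) - 2*l2))"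
    by (simp add: powr_def)
  have two: "exp l2 = 2" by (simp add: l2_def)
  have kexp: "exp K = kk" using kk by (simp add: K_def)
  have Texp: "exp L = TT" using TT by (simp add: L_def)
  define A where "A = (\<alpha>+1)*(4*l2)"
  define B where "B = K/(\<alpha>+1)"
  define C where "C = L/(\<alpha>+1)"
  define D where "D = (1-2*\<alpha>)*(a*(K - L) - 2*l2)"
  define G where "G = a*(K - L) - 2*l2"
  have gen1: "\<And>x y z w q::real. 2 / x * q / y * z * w = q * (2 / x / y * z * w)" by (simp add: field_simps)
  have xe: "exp (l2 - A - B + C + D) = exp l2 / exp A / exp B * exp C * exp D" by (simp only: exp_add exp_diff)
  have LHS: "(2 / 16 powr (\<alpha>+1) * Q0 / kk powr (1/(\<alpha>+1))) * TT powr (1/(\<alpha>+1))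
           * (1/4 * (kk/TT) powr a) powr (1-2*\<alpha>)
        = Q0 * exp (l2 - A - B + C + D)"
    unfolding e1 e2 e3 e5 e6 xe two A_def[symmetric] B_def[symmetric] C_def[symmetric] D_def[symmetric]
    by (rule gen1)
  have e8: "exp (3*l2) = 8"
  proof -
    have "exp (3*l2) = exp (l2 + l2 + l2)" by (simp add: algebra_simps)
    also have "\<dots> = exp l2 * exp l2 * exp l2" by (simp only: exp_add)
    also have "\<dots> = 8" by (simp add: l2_def)
    finally show ?thesis .
  qed
  have gen2: "\<And>q x y z::real. 1/8 * (q/x) * y * z = q * (1 / 8 / x * y * z)"
    by (simp add: field_simps)
  have xe2: "exp (0 - 3*l2 - K + G + L) = exp 0 / exp (3*l2) / exp K * exp G * exp L"
    by (simp only: exp_add exp_diff)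
  have RHS: "1/8 * (Q0/kk) * (1/4 * (kk/TT) powr a) * TT
        = Q0 * exp (0 - 3*l2 - K + G + L)"
    unfolding e5 G_def[symmetric] xe2 e8 kexp Texp exp_zero
    by (rule gen2)
  have ex: "l2 - A - B + C + D = 0 - 3*l2 - K + G + L"
  proof -
    have h: "2*\<alpha>*a = 1 - 2*a" unfolding a_def using a1 by (simp add: field_simps)
    have hB: "B = 2*a*K" unfolding B_def a_def using a1 by (simp add: field_simps)
    have hC: "C = 2*a*L" unfolding C_def a_def using a1 by (simp add: field_simps)
    show ?thesis unfolding hB hC A_def D_def G_def using h by algebra
  qed
  show ?thesis using LHS RHS ex unfolding a_def by metis
qed

lemma arith2:
  fixes \<alpha> kk TT Q0 :: real
  assumes a1: "1 \<le> \<alpha>" and kk: "0 < kk" and TT: "kk \<le> TT" and Q0: "0 \<le> Q0"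
  shows "4 * (1/32 * (2 / 16 powr (\<alpha>+1) * Q0 / kk powr (1/(\<alpha>+1))) * TT powr (1/(\<alpha>+1)))
         \<le> 3/8 * (Q0/kk) * TT"
proof -
  define b where "b = 1/(\<alpha>+1)"
  have b: "0 \<le> b" "b \<le> 1" using a1 by (auto simp: b_def)
  have TT0: "0 < TT" using kk TT by simp
  have r1: "1 \<le> TT/kk" using kk TT by simp
  have "TT powr b / kk powr b = (TT/kk) powr b" using kk TT0 by (simp add: powr_divide)
  also have "\<dots> \<le> (TT/kk) powr 1" using powr_mono[OF b(2) r1] .
  also have "\<dots> = TT/kk" using kk TT0 by simp
  finally have q: "TT powr b / kk powr b \<le> TT/kk" .
  have s16: "1 \<le> 16 powr (\<alpha>+1)" using a1 by (simp add: ge_one_powr_ge_zero)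
  have "4 * (1/32 * (2 / 16 powr (\<alpha>+1) * Q0 / kk powr b) * TT powr b)
      = (1/4) * Q0 * (1 / 16 powr (\<alpha>+1)) * (TT powr b / kk powr b)" by (simp add: field_simps)
  also have "\<dots> \<le> (1/4) * Q0 * 1 * (TT/kk)"
    using s16 q Q0 kk TT0 by (intro mult_mono) (auto simp: field_simps)
  also have "\<dots> \<le> 3/8 * (Q0/kk) * TT" using Q0 kk TT0 by (simp add: field_simps)
  finally show ?thesis unfolding b_def .
qed

lemma arith3:
  fixes \<alpha> :: real and k T n N :: nat
  assumes a1: "1 \<le> \<alpha>" and k: "1 \<le> k" and N: "2 + 2*\<alpha> \<le> real N"
    and T: "real k * (real n + 1) ^ N \<le> real T"
  shows "(real n + 1) * (1/4 * (real k / real T) powr (1/(2+2*\<alpha>))) \<le> 1/4"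
proof -
  define y where "y = 1 / (real n + 1)"
  define a where "a = 1/(2+2*\<alpha>)"
  have y: "0 < y" "y \<le> 1" by (auto simp: y_def)
  have "1 \<le> (real n + 1) ^ N" by simp
  moreover have "1 \<le> real k" using k by simp
  ultimately have "1 \<le> real k * (real n + 1) ^ N" using mult_mono[of 1 "real k" 1 "(real n + 1) ^ N"] by simp
  then have Tp: "0 < real T" using T by simp
  have x0: "0 \<le> real k / real T" by simp
  have "real k / real T \<le> 1 / (real n + 1) ^ N"
    using T Tp by (simp add: field_simps)
  also have "\<dots> = y powr real N" using y by (simp add: powr_realpow y_def power_one_over)
  finally have xy: "real k / real T \<le> y powr real N" .
  have a0: "0 \<le> a" using a1 by (simp add: a_def)
  have "(real k / real T) powr a \<le> (y powr real N) powr a" using powr_mono2[OF a0 x0 xy] .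
  also have "\<dots> = y powr (real N * a)" by (simp add: powr_powr)
  also have "\<dots> \<le> y powr 1"
  proof (rule powr_mono')
    show "1 \<le> real N * a" using N a1 by (simp add: a_def field_simps)
  qed (use y in auto)
  also have "\<dots> = y" using y by simp
  finally have "(real k / real T) powr a \<le> y" .
  then have "(real n + 1) * (real k / real T) powr a \<le> 1"
    by (simp add: y_def field_simps)
  then show ?thesis unfolding a_def by simp
qed

theorem mainTheorem9:
  fixes \<alpha> :: real and m k n :: nat
  assumes "1 \<le> \<alpha>" and "2 \<le> m" and "m \<le> k" and "k < n"
  shows "\<exists>T0::nat. \<forall>T\<ge>T0. \<forall>\<pi>::policy.
           valid_alg m n \<pi> \<and> SR \<alpha> m k n T \<pi> \<longrightarrow>
           (\<forall>i\<in>{1..k}.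
              measure_pmf.prob (run \<pi> (nu_inst \<alpha> k n T i) T) (tau_event m n k i)
                \<le> 1/2 * ((real k - real m + 1) / real k))"
proof -
  note a1 = assms(1)
  define N where "N = nat \<lceil>2 + 2*\<alpha>\<rceil>"
  have N: "2 + 2*\<alpha> \<le> real N" unfolding N_def by linarith
  define T0 where "T0 = k * (n + 1) ^ N"
  show ?thesis
  proof (intro exI[of _ T0] allI impI ballI)
    fix T :: nat and \<pi> :: policy and i :: nat
    assume T: "T0 \<le> T" and asm: "valid_alg m n \<pi> \<and> SR \<alpha> m k n T \<pi>" and i: "i \<in> {1..k}"
    have valid: "valid_alg m n \<pi>" using asm by simp
    have k1: "1 \<le> k" using assms by simp
    have TT: "real k * (real n + 1) ^ N \<le> real T"
    proof -
      have "real T0 = real k * (real n + 1) ^ N" by (simp add: T0_def add.commute)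
      then show ?thesis using T by (metis of_nat_le_iff)
    qed
    have Tk: "real k \<le> real T"
    proof -
      have "1 \<le> (real n + 1) ^ N" by simp
      then have "real k * 1 \<le> real k * (real n + 1) ^ N" by (intro mult_left_mono) auto
      then show ?thesis using TT by simp
    qed
    have Tp: "0 < real T" using Tk k1 by simp
    define \<epsilon> where "\<epsilon> = eps \<alpha> k T"
    have eps_pos: "0 < \<epsilon>" unfolding \<epsilon>_def eps_def using Tp k1 by simp
    have hn: "(real n + 1) * \<epsilon> \<le> 1/4" unfolding \<epsilon>_def eps_def
      using arith3[OF a1 k1 N TT] by simp
    define mu where "mu = nu_inst \<alpha> k n T i"
    define mu' where "mu' = nu_inst' \<alpha> k n T i"
    have ik: "i \<le> k" and i1: "1 \<le> i" using i by auto
    have n1: "1 \<le> n" using assms by simp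
    have gapi: "mu j \<le> mu i - \<epsilon>" if "j \<in> {1..n}" "j \<noteq> i" for j
      using that ik i1 eps_pos unfolding mu_def nu_inst_def \<epsilon>_def[symmetric]
      by (auto simp: algebra_simps)
    have mu_rng: "1/2 \<le> mu j \<and> mu j \<le> 1/2 + (real n + 1) * \<epsilon>" for j
      using eps_pos n1 unfolding mu_def nu_inst_def \<epsilon>_def[symmetric]
      by (auto simp: algebra_simps)
    have best: "best_mean n mu = mu i"
      unfolding best_mean_def
    proof (rule Max_eqI)
      show "finite (mu ` {1..n})" by simp
      show "mu i \<in> mu ` {1..n}" using ik i1 assms by auto
      fix y assume "y \<in> mu ` {1..n}"
      then obtain j where j: "j \<in> {1..n}" "y = mu j" by auto
      show "y \<le> mu i" using gapi[OF j(1)] eps_pos j by (cases "j = i") auto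
    qed
    have agree: "mu j = mu' j" if "j \<le> k" for j
      using that unfolding mu_def mu'_def nu_inst'_def by simp
    have mu'_rng: "mu' j \<le> 1 \<and> 0 \<le> mu' j" for j
      using mu_rng[of j] hn unfolding mu'_def nu_inst'_def mu_def[symmetric] by auto
    have best': "best_mean n mu' = 1"
      unfolding best_mean_def
    proof (rule Max_eqI)
      show "finite (mu' ` {1..n})" by simp
      show "1 \<in> mu' ` {1..n}"
      proof
        show "1 = mu' n" unfolding mu'_def nu_inst'_def using assms by simp
      qed (use n1 in auto)
      fix y assume "y \<in> mu' ` {1..n}"
      then show "y \<le> 1" using mu'_rng by auto
    qed
    have bnd: "\<bar>mu j\<bar> \<le> 1" for j using mu_rng[of j] hn eps_pos by auto
    have bnd': "\<bar>mu' j\<bar> \<le> 1" for j using mu'_rng[of j] by auto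
    define P where "P = measure_pmf.prob (run \<pi> mu T) (tau_event m n k i)"
    define EL where "EL = measure_pmf.expectation (run \<pi> mu T) (\<lambda>h. real (Lf m n k init_state h))"
    define EL' where "EL' = measure_pmf.expectation (run \<pi> mu' T) (\<lambda>h. real (Lf m n k init_state h))"
    have ELeq: "EL = EL'" unfolding EL_def EL'_def by (rule EL_eq[OF valid agree])
    have low1: "\<epsilon> * (real T * P - EL) \<le> exp_regret \<pi> n mu T"
      unfolding P_def EL_def
    proof (rule exp_lower_nu[OF valid bnd _ _ ik])
      show "0 \<le> best_mean n mu - mu j" if "j \<in> {1..n}" for j
        using gapi[OF that] eps_pos best by (cases "j = i") auto
      show "\<epsilon> \<le> best_mean n mu - mu j" if "j \<in> {1..n}" "j \<noteq> i" for j
        using gapi[OF that] best by simp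
    qed (use eps_pos in simp)
    have low2: "1/4 * EL' \<le> exp_regret \<pi> n mu' T"
      unfolding EL'_def
    proof (rule exp_lower_nu'[OF valid bnd'])
      show "0 \<le> best_mean n mu' - mu' j" for j using mu'_rng[of j] best' by simp
      show "1/4 \<le> best_mean n mu' - mu' j" if "j \<in> {1..k}" for j
        using that mu_rng[of j] hn best' agree[of j] by simp
    qed
    have SR1: "exp_regret \<pi> n mu T \<le> f_km \<alpha> k m * real T powr (1 / (\<alpha> + 1)) * \<epsilon> powr (1 - 2 * \<alpha>)"
      using asm i unfolding SR_def mu_def \<epsilon>_def by blast
    have SR2: "exp_regret \<pi> n mu' T \<le> 1/32 * f_km \<alpha> k m * real T powr (1 / (\<alpha> + 1))"
      using asm i unfolding SR_def mu'_def by blast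
    define Q0 where "Q0 = real k - real m + 1"
    have Q0: "0 \<le> Q0" using assms unfolding Q0_def by simp
    have kp: "0 < real k" using k1 by simp
    have A1: "f_km \<alpha> k m * real T powr (1 / (\<alpha> + 1)) * \<epsilon> powr (1 - 2 * \<alpha>)
        = 1/8 * (Q0 / real k) * \<epsilon> * real T"
      unfolding f_km_def \<epsilon>_def eps_def Q0_def by (rule arith1[OF a1 kp Tp])
    have A2: "4 * (1/32 * f_km \<alpha> k m * real T powr (1 / (\<alpha> + 1))) \<le> 3/8 * (Q0 / real k) * real T"
      unfolding f_km_def Q0_def using arith2[OF a1 kp Tk Q0[unfolded Q0_def]] by (simp only: mult.assoc)
    have c1: "\<epsilon> * (real T * P - EL) \<le> \<epsilon> * (1/8 * (Q0 / real k) * real T)"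
      using low1 SR1 A1 by (simp add: algebra_simps)
    then have c1': "real T * P - EL \<le> 1/8 * (Q0 / real k) * real T"
      using eps_pos mult_le_cancel_left_pos[OF eps_pos] by blast
    have c2: "EL \<le> 3/8 * (Q0 / real k) * real T" using low2 SR2 A2 ELeq by linarith
    have "real T * P \<le> real T * (1/2 * (Q0 / real k))" using c1' c2 by (simp add: algebra_simps)
    then have "P \<le> 1/2 * (Q0 / real k)" using mult_le_cancel_left_pos[OF Tp] by blast
    then show "measure_pmf.prob (run \<pi> (nu_inst \<alpha> k n T i) T) (tau_event m n k i)
                \<le> 1/2 * ((real k - real m + 1) / real k)"
      unfolding P_def mu_def Q0_def .
  qed
qed

end
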